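(* Let $N_\mathrm{t},N_\mathrm{r}\ge1$ and let $\mathbf{H}\in\mathbb{C}^{N_\mathrm{r}\times N_\mathrm{t}}$ have i.i.d. entries distributed as $\mathcal{CN}(0,1)$. Let $\check{\mathbf{x}}_k,\check{\mathbf{x}}_{k'}\in\{-1,+1\}^{N_\mathrm{t}}$ (BPSK labels) differ in exactly $d$ coordinates, $1\le d\le N_\mathrm{t}$, and set $\mathbf{g}_k=\mathbf{H}\check{\mathbf{x}}_k$, $\mathbf{g}_{k'}=\mathbf{H}\check{\mathbf{x}}_{k'}$. Then $$\mathbb{P}\big[\operatorname{sign}(\mathbf{g}_k)=\operatorname{sign}(\mathbf{g}_{k'})\big]=\left[\frac{2}{\pi}\arctan\sqrt{\frac{N_\mathrm{t}-d}{d}}\right]^{2N_\mathrm{r}}.$$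
   Context: For real $a$, $\operatorname{sign}(a)=+1$ if $a\ge0$ and $-1$ if $a<0$; for complex $a$, $\operatorname{sign}(a)=\operatorname{sign}(\Re\{a\})+j\operatorname{sign}(\Im\{a\})$; on vectors it acts element-wise. *)

theory Defs
  imports "HOL-Probability.Probability"
begin

definition rsign :: "real \<Rightarrow> real" where
  "rsign a = (if a \<ge> 0 then 1 else -1)"

definition csign :: "complex \<Rightarrow> complex" where
  "csign z = Complex (rsign (Re z)) (rsign (Im z))"

text \<open>CN(0,1): the 2 Nr Nt real random variables Re (H i j), Im (H i j)
  are mutually independent, each distributed N(0, 1/2).\<close>
definition iid_CN_matrix ::
  "'a measure \<Rightarrow> nat \<Rightarrow> nat \<Rightarrow> (nat \<Rightarrow> nat \<Rightarrow> 'a \<Rightarrow> complex) \<Rightarrow> bool" where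
  "iid_CN_matrix M Nr Nt H \<longleftrightarrow>
     prob_space.indep_vars M (\<lambda>_. borel)
       (\<lambda>(i, j, b) \<omega>. if b then Re (H i j \<omega>) else Im (H i j \<omega>))
       ({..<Nr} \<times> {..<Nt} \<times> (UNIV :: bool set)) \<and>
     (\<forall>i<Nr. \<forall>j<Nt.
        distributed M lborel (\<lambda>\<omega>. Re (H i j \<omega>)) (\<lambda>x. ennreal (normal_density 0 (sqrt (1/2)) x)) \<and>
        distributed M lborel (\<lambda>\<omega>. Im (H i j \<omega>)) (\<lambda>x. ennreal (normal_density 0 (sqrt (1/2)) x)))"

definition mat_vec :: "nat \<Rightarrow> (nat \<Rightarrow> nat \<Rightarrow> complex) \<Rightarrow> (nat \<Rightarrow> real) \<Rightarrow> nat \<Rightarrow> complex" where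
  "mat_vec Nt A x i = (\<Sum>j<Nt. A i j * complex_of_real (x j))"

end

theory Submission
  imports Defs "HOL-Real_Asymp.Real_Asymp"
begin

lemma half_gauss:
  fixes a :: real assumes a: "0 < a"
  shows "(\<integral>\<^sup>+u. ennreal (u * exp (- a * u\<^sup>2)) * indicator {0..} u \<partial>lborel) = ennreal (1 / (2 * a))"
proof -
  have "(\<integral>\<^sup>+u. ennreal (u * exp (- a * u\<^sup>2)) * indicator {0..} u \<partial>lborel)
      = ennreal (0 - (- exp (- a * 0\<^sup>2) / (2 * a)))"
  proof (rule nn_integral_FTC_atLeast)
    show "((\<lambda>u. - exp (- a * u\<^sup>2) / (2 * a)) \<longlongrightarrow> 0) at_top"
      using a by real_asymp
  qed (use a in \<open>auto intro!: derivative_eq_intros simp: field_simps\<close>)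
  then show ?thesis by simp
qed

lemma abs_gauss:
  fixes a :: real assumes a: "0 < a"
  shows "(\<integral>\<^sup>+u. ennreal (\<bar>u\<bar> * exp (- a * u\<^sup>2)) \<partial>lborel) = ennreal (1 / a)"
proof -
  let ?f = "\<lambda>u::real. ennreal (\<bar>u\<bar> * exp (- a * u\<^sup>2))"
  have "(\<integral>\<^sup>+u. ?f u \<partial>lborel) = (\<integral>\<^sup>+u. ?f u * indicator {0..} u + ?f u * indicator {..<0} u \<partial>lborel)"
    by (intro nn_integral_cong) (auto split: split_indicator)
  also have "\<dots> = (\<integral>\<^sup>+u. ?f u * indicator {0..} u \<partial>lborel) + (\<integral>\<^sup>+u. ?f u * indicator {..<0} u \<partial>lborel)"
    by (rule nn_integral_add) auto
  also have "(\<integral>\<^sup>+u. ?f u * indicator {..<0} u \<partial>lborel) = (\<integral>\<^sup>+u. ?f (0 + (-1) * u) * indicator {..<0} (0 + (-1) * u) \<partial>lborel)"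
    using nn_integral_real_affine[of "\<lambda>u. ?f u * indicator {..<0} u" "-1" 0] by simp
  also have "\<dots> = (\<integral>\<^sup>+u. ?f u * indicator {0..} u \<partial>lborel)"
    by (intro nn_integral_cong_AE, use AE_lborel_singleton[of 0] in eventually_elim) (auto split: split_indicator)
  also have "(\<integral>\<^sup>+u. ?f u * indicator {0..} u \<partial>lborel) = ennreal (1 / (2 * a))"
    using half_gauss[OF a] by (intro trans[OF nn_integral_cong half_gauss[OF a]]) (auto split: split_indicator)
  finally show ?thesis using a by (simp add: ennreal_plus[symmetric] del: ennreal_plus)
qed

lemma rsign_scale:
  fixes u s :: real assumes "u \<noteq> 0" "s \<noteq> 1" "s \<noteq> -1"
  shows "(rsign (u + u * s) = rsign (u - u * s)) \<longleftrightarrow> (-1 < s \<and> s < 1)"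
proof -
  have e1: "u + u * s = u * (1 + s)" and e2: "u - u * s = u * (1 - s)" by (simp_all add: algebra_simps)
  show ?thesis unfolding e1 e2 rsign_def using assms
    by (cases "u > 0") (auto simp: zero_le_mult_iff)
qed

lemma dens_prod:
  fixes s1 s2 u s :: real assumes "0 < s1" "0 < s2"
  shows "normal_density 0 s1 u * normal_density 0 s2 (u * s)
    = (1 / (2 * pi * s1 * s2)) * exp (- ((s2\<^sup>2 + s\<^sup>2 * s1\<^sup>2) / (2 * s1\<^sup>2 * s2\<^sup>2)) * u\<^sup>2)"
proof -
  have "sqrt (2 * pi * s1\<^sup>2) * sqrt (2 * pi * s2\<^sup>2) = 2 * pi * s1 * s2"
  proof -
    have "sqrt (2 * pi * s1\<^sup>2) * sqrt (2 * pi * s2\<^sup>2) = sqrt ((2 * pi * s1 * s2)\<^sup>2)"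
      by (simp add: real_sqrt_mult[symmetric] power2_eq_square mult_ac)
    also have "\<dots> = 2 * pi * s1 * s2" using assms by simp
    finally show ?thesis .
  qed
  moreover have "- (u\<^sup>2 / (2 * s1\<^sup>2)) - (u * s)\<^sup>2 / (2 * s2\<^sup>2) = - ((s2\<^sup>2 + s\<^sup>2 * s1\<^sup>2) / (2 * s1\<^sup>2 * s2\<^sup>2)) * u\<^sup>2"
    using assms by (simp add: field_simps power2_eq_square)
  ultimately show ?thesis
    unfolding normal_density_def
    by (simp add: mult_exp_exp del: exp_diff)
qed

lemma rsign_measurable[measurable]: "rsign \<in> borel_measurable borel"
  unfolding rsign_def[abs_def] by measurable

definition Tset :: "(real \<times> real) set" where
  "Tset = {p. rsign (fst p + snd p) = rsign (fst p - snd p)}"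

lemma Tset_sets[measurable]: "Tset \<in> sets (borel \<Otimes>\<^sub>M borel)"
proof -
  have "Tset = {p \<in> space (borel \<Otimes>\<^sub>M borel). rsign (fst p + snd p) = rsign (fst p - snd p)}"
    by (simp add: Tset_def space_pair_measure)
  also have "\<dots> \<in> sets (borel \<Otimes>\<^sub>M borel)" by measurable
  finally show ?thesis .
qed

lemma core:
  fixes s1 s2 :: real assumes s1: "0 < s1" and s2: "0 < s2"
  shows "(\<integral>\<^sup>+u. \<integral>\<^sup>+v. ennreal (normal_density 0 s1 u) * ennreal (normal_density 0 s2 v) * indicator Tset (u, v) \<partial>lborel \<partial>lborel)
     = ennreal (2 / pi * arctan (s1 / s2))"
proof -
  define h where "h s = s1 * s2 / (pi * (s2\<^sup>2 + s\<^sup>2 * s1\<^sup>2))" for s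
  let ?G = "\<lambda>u s. ennreal (\<bar>u\<bar> * (normal_density 0 s1 u * normal_density 0 s2 (u * s))) * indicator {-1<..<1::real} s"
  have step1: "(\<integral>\<^sup>+v. ennreal (normal_density 0 s1 u) * ennreal (normal_density 0 s2 v) * indicator Tset (u, v) \<partial>lborel)
      = (\<integral>\<^sup>+s. ?G u s \<partial>lborel)" if u: "u \<noteq> 0" for u
  proof -
    have "(\<integral>\<^sup>+v. ennreal (normal_density 0 s1 u) * ennreal (normal_density 0 s2 v) * indicator Tset (u, v) \<partial>lborel)
      = ennreal \<bar>u\<bar> * (\<integral>\<^sup>+s. ennreal (normal_density 0 s1 u) * ennreal (normal_density 0 s2 (0 + u * s)) * indicator Tset (u, 0 + u * s) \<partial>lborel)"
      by (subst nn_integral_real_affine[OF _ u, where t=0]) auto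
    also have "\<dots> = (\<integral>\<^sup>+s. ennreal \<bar>u\<bar> * (ennreal (normal_density 0 s1 u) * ennreal (normal_density 0 s2 (u * s)) * indicator Tset (u, u * s)) \<partial>lborel)"
      by (subst nn_integral_cmult) auto
    also have "\<dots> = (\<integral>\<^sup>+s. ?G u s \<partial>lborel)"
    proof (rule nn_integral_cong_AE)
      show "AE s in lborel. ennreal \<bar>u\<bar> * (ennreal (normal_density 0 s1 u) * ennreal (normal_density 0 s2 (u * s)) * indicator Tset (u, u * s)) = ?G u s"
        using AE_lborel_singleton[of "1::real"] AE_lborel_singleton[of "-1::real"]
      proof eventually_elim
        case (elim s)
        then have "indicator Tset (u, u * s) = (indicator {-1<..<1::real} s :: ennreal)"
          using rsign_scale[OF u, of s] by (simp add: Tset_def indicator_def)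
        then show ?case
          by (simp add: ennreal_mult mult.assoc)
      qed
    qed
    finally show ?thesis .
  qed
  have "(\<integral>\<^sup>+u. \<integral>\<^sup>+v. ennreal (normal_density 0 s1 u) * ennreal (normal_density 0 s2 v) * indicator Tset (u, v) \<partial>lborel \<partial>lborel)
      = (\<integral>\<^sup>+u. \<integral>\<^sup>+s. ?G u s \<partial>lborel \<partial>lborel)"
    by (rule nn_integral_cong_AE) (use AE_lborel_singleton[of "0::real"] in \<open>eventually_elim, simp add: step1\<close>)
  also have "\<dots> = (\<integral>\<^sup>+s. \<integral>\<^sup>+u. ?G u s \<partial>lborel \<partial>lborel)"
    by (rule lborel_pair.Fubini'[symmetric]) measurable
  also have "\<dots> = (\<integral>\<^sup>+s. ennreal (h s) * indicator {-1<..<1::real} s \<partial>lborel)"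
  proof (rule nn_integral_cong)
    fix s :: real
    define a where "a = (s2\<^sup>2 + s\<^sup>2 * s1\<^sup>2) / (2 * s1\<^sup>2 * s2\<^sup>2)"
    have a: "0 < a" unfolding a_def using s1 s2 by (intro divide_pos_pos add_pos_nonneg) auto
    have "(\<integral>\<^sup>+u. ?G u s \<partial>lborel) = (\<integral>\<^sup>+u. ennreal (1 / (2 * pi * s1 * s2)) * ennreal (\<bar>u\<bar> * exp (- a * u\<^sup>2)) \<partial>lborel) * indicator {-1<..<1::real} s"
    proof (subst nn_integral_multc[symmetric], simp, intro nn_integral_cong)
      fix u :: real
      have e: "\<bar>u\<bar> * (normal_density 0 s1 u * normal_density 0 s2 (u * s)) = (1 / (2 * pi * s1 * s2)) * (\<bar>u\<bar> * exp (- a * u\<^sup>2))"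
        by (simp add: dens_prod[OF s1 s2] a_def)
      have "ennreal (1 / (2 * pi * s1 * s2)) * ennreal (\<bar>u\<bar> * exp (- a * u\<^sup>2)) = ennreal ((1 / (2 * pi * s1 * s2)) * (\<bar>u\<bar> * exp (- a * u\<^sup>2)))"
        using s1 s2 by (intro ennreal_mult[symmetric]) auto
      then show "?G u s = ennreal (1 / (2 * pi * s1 * s2)) * ennreal (\<bar>u\<bar> * exp (- a * u\<^sup>2)) * indicator {-1<..<1::real} s"
        by (simp only: e)
    qed
    also have "\<dots> = ennreal (1 / (2 * pi * s1 * s2)) * ennreal (1 / a) * indicator {-1<..<1::real} s"
      using abs_gauss[OF a] by (subst nn_integral_cmult) auto
    also have "ennreal (1 / (2 * pi * s1 * s2)) * ennreal (1 / a) = ennreal (h s)"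
      using s1 s2 a by (simp add: ennreal_mult[symmetric] h_def a_def field_simps power2_eq_square)
    finally show "(\<integral>\<^sup>+u. ?G u s \<partial>lborel) = ennreal (h s) * indicator {-1<..<1::real} s" .
  qed
  also have "\<dots> = (\<integral>\<^sup>+s. ennreal (h s * indicator {-1..1::real} s) \<partial>lborel)"
    by (rule nn_integral_cong_AE)
       (use AE_lborel_singleton[of "1::real"] AE_lborel_singleton[of "-1::real"] in \<open>eventually_elim, auto split: split_indicator\<close>)
  also have "\<dots> = ennreal (arctan (s1 / s2 * 1) / pi - arctan (s1 / s2 * (-1)) / pi)"
  proof -
    have hb: "has_bochner_integral lborel (\<lambda>s. h s * indicator {-1..1::real} s) (arctan (s1 / s2 * 1) / pi - arctan (s1 / s2 * (-1)) / pi)"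
    proof (rule has_bochner_integral_FTC_Icc_real)
      fix x :: real
      show "((\<lambda>x. arctan (s1 / s2 * x) / pi) has_real_derivative h x) (at x)"
      proof -
        have d: "((\<lambda>x. arctan (s1 / s2 * x) / pi) has_real_derivative (1 / (1 + (s1 / s2 * x)\<^sup>2) * (s1 / s2 * 1) / pi)) (at x)"
          apply (intro derivative_eq_intros)
          apply (rule refl)+
           apply simp
          apply (simp add: inverse_eq_divide)
          done
        have p1: "1 + (s1 / s2 * x)\<^sup>2 \<noteq> 0" by (metis add_pos_nonneg zero_less_one zero_le_power2 less_irrefl)
        have p2: "s2\<^sup>2 + x\<^sup>2 * s1\<^sup>2 \<noteq> 0" using s2 by (metis add_pos_nonneg zero_less_power2 zero_le_mult_iff zero_le_power2 less_irrefl less_numeral_extra(3))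
        have "1 / (1 + (s1 / s2 * x)\<^sup>2) * (s1 / s2 * 1) / pi = h x"
          using p1 p2 s1 s2 unfolding h_def by (simp add: field_simps power2_eq_square)
        with d show ?thesis by simp
      qed
      show "isCont h x" unfolding h_def using s1 s2
        by (intro continuous_intros) (auto simp: add_nonneg_eq_0_iff)
    qed simp
    have "0 \<le> h x" for x unfolding h_def using s1 s2 by (auto intro!: divide_nonneg_pos add_pos_nonneg)
    then show ?thesis
      using hb by (subst nn_integral_eq_integral) (auto simp: has_bochner_integral_iff split: split_indicator)
  qed
  also have "arctan (s1 / s2 * 1) / pi - arctan (s1 / s2 * (-1)) / pi = 2 / pi * arctan (s1 / s2)"
    by (simp add: arctan_minus)
  finally show ?thesis .
qed

lemma (in prob_space) block:
  fixes Xv :: "'k \<Rightarrow> 'a \<Rightarrow> real" and J :: "'k set" and c c' :: "'k \<Rightarrow> real"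
  assumes ind: "indep_vars (\<lambda>_. borel) Xv J" and fin: "finite J"
    and dist: "\<And>k. k \<in> J \<Longrightarrow> distributed M lborel (Xv k) (\<lambda>x. ennreal (normal_density 0 (sqrt (1/2)) x))"
    and c: "\<And>k. k \<in> J \<Longrightarrow> c k \<in> {-1, 1}" and c': "\<And>k. k \<in> J \<Longrightarrow> c' k \<in> {-1, 1}"
    and Dne: "{k\<in>J. c k \<noteq> c' k} \<noteq> {}"
  shows "prob {\<omega> \<in> space M. rsign (\<Sum>k\<in>J. Xv k \<omega> * c k) = rsign (\<Sum>k\<in>J. Xv k \<omega> * c' k)}
    = 2 / pi * arctan (sqrt (real (card {k\<in>J. c k = c' k}) / real (card {k\<in>J. c k \<noteq> c' k})))"
proof -
  define C where "C = {k\<in>J. c k = c' k}"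
  define D where "D = {k\<in>J. c k \<noteq> c' k}"
  define W where "W k \<omega> = Xv k \<omega> * c k" for k \<omega>
  define U where "U \<omega> = (\<Sum>k\<in>C. W k \<omega>)" for \<omega>
  define V where "V \<omega> = (\<Sum>k\<in>D. W k \<omega>)" for \<omega>
  have finC: "finite C" and finD: "finite D" using fin by (auto simp: C_def D_def)
  have CD: "C \<inter> D = {}" "J = C \<union> D" "C \<subseteq> J" "D \<subseteq> J" by (auto simp: C_def D_def)
  have indW: "indep_vars (\<lambda>_. borel) W J"
    unfolding W_def by (rule indep_vars_compose2[OF ind]) auto
  have distW: "distributed M lborel (W k) (\<lambda>x. ennreal (normal_density 0 (sqrt (1/2)) x))" if k: "k \<in> J" for k
  proof -
    have ck: "c k \<noteq> 0" "\<bar>c k\<bar> = 1" using c[OF k] by auto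
    have "distributed M lborel (\<lambda>x. 0 + c k * Xv k x) (\<lambda>x. ennreal (normal_density (0 + c k * 0) (\<bar>c k\<bar> * sqrt (1/2)) x))"
      by (rule normal_density_affine[OF dist[OF k]]) (use ck in auto)
    moreover have "(\<lambda>x. c k * Xv k x) = W k" by (auto simp: W_def fun_eq_iff)
    ultimately show ?thesis using ck by simp
  qed
  have sumJ: "(\<Sum>k\<in>J. Xv k \<omega> * c k) = U \<omega> + V \<omega>" for \<omega>
    unfolding U_def V_def W_def CD(2) using finC finD CD(1) by (rule sum.union_disjoint)
  have sumJ': "(\<Sum>k\<in>J. Xv k \<omega> * c' k) = U \<omega> - V \<omega>" for \<omega>
  proof -
    have "(\<Sum>k\<in>J. Xv k \<omega> * c' k) = (\<Sum>k\<in>C. Xv k \<omega> * c' k) + (\<Sum>k\<in>D. Xv k \<omega> * c' k)"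
      unfolding CD(2) using finC finD CD(1) by (rule sum.union_disjoint)
    also have "(\<Sum>k\<in>C. Xv k \<omega> * c' k) = U \<omega>" unfolding U_def W_def
      by (rule sum.cong) (auto simp: C_def)
    also have "(\<Sum>k\<in>D. Xv k \<omega> * c' k) = - V \<omega>" unfolding V_def W_def sum_negf[symmetric]
    proof (rule sum.cong)
      fix k assume "k \<in> D"
      then have "c' k = - c k" using c[of k] c'[of k] by (auto simp: D_def)
      then show "Xv k \<omega> * c' k = - (Xv k \<omega> * c k)" by simp
    qed simp
    finally show ?thesis by simp
  qed
  have Dne': "D \<noteq> {}" using Dne by (simp add: D_def)
  have distV: "distributed M lborel V (\<lambda>x. ennreal (normal_density 0 (sqrt (real (card D) / 2)) x))"
  proof -
    have "distributed M lborel (\<lambda>x. \<Sum>k\<in>D. W k x) (normal_density (\<Sum>k\<in>D. 0) (sqrt (\<Sum>k\<in>D. (sqrt (1/2))\<^sup>2)))"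
      by (rule sum_indep_normal[OF finD Dne' indep_vars_subset[OF indW CD(4)]])
         (use CD(4) distW in auto)
    then show ?thesis by (simp add: V_def[abs_def])
  qed
  have ev: "{\<omega> \<in> space M. rsign (\<Sum>k\<in>J. Xv k \<omega> * c k) = rsign (\<Sum>k\<in>J. Xv k \<omega> * c' k)}
      = (\<lambda>\<omega>. (U \<omega>, V \<omega>)) -` Tset \<inter> space M"
    by (auto simp: sumJ sumJ' Tset_def)
  show ?thesis
  proof (cases "C = {}")
    case True
    then have U0: "U \<omega> = 0" for \<omega> by (simp add: U_def)
    have "(\<lambda>\<omega>. (U \<omega>, V \<omega>)) -` Tset \<inter> space M = V -` {0} \<inter> space M"
      by (auto simp: U0 Tset_def rsign_def)
    then have "emeasure M {\<omega> \<in> space M. rsign (\<Sum>k\<in>J. Xv k \<omega> * c k) = rsign (\<Sum>k\<in>J. Xv k \<omega> * c' k)}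
        = (\<integral>\<^sup>+x. ennreal (normal_density 0 (sqrt (real (card D) / 2)) x) * indicator {0} x \<partial>lborel)"
      by (simp add: ev distributed_emeasure[OF distV])
    also have "\<dots> = 0"
    proof -
      have "AE x in lborel. ennreal (normal_density 0 (sqrt (real (card D) / 2)) x) * indicator {0} x = 0"
        using AE_lborel_singleton[of "0::real"] by eventually_elim simp
      then show ?thesis by (subst nn_integral_cong_AE[where v="\<lambda>_. 0"]) auto
    qed
    finally show ?thesis using True by (simp add: measure_def C_def[symmetric])
  next
    case False
    have distU: "distributed M lborel U (\<lambda>x. ennreal (normal_density 0 (sqrt (real (card C) / 2)) x))"
    proof -
      have "distributed M lborel (\<lambda>x. \<Sum>k\<in>C. W k x) (normal_density (\<Sum>k\<in>C. 0) (sqrt (\<Sum>k\<in>C. (sqrt (1/2))\<^sup>2)))"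
        by (rule sum_indep_normal[OF finC False indep_vars_subset[OF indW CD(3)]])
           (use CD(3) distW in auto)
      then show ?thesis by (simp add: U_def[abs_def])
    qed
    have indUV: "indep_var lborel U lborel V"
    proof -
      have "indep_var lborel ((\<lambda>f. \<Sum>k\<in>C. f k) \<circ> (\<lambda>\<omega>. restrict (\<lambda>k. W k \<omega>) C))
                      lborel ((\<lambda>f. \<Sum>k\<in>D. f k) \<circ> (\<lambda>\<omega>. restrict (\<lambda>k. W k \<omega>) D))"
        by (intro indep_var_compose[OF indep_var_restrict[OF indW CD(1) CD(3) CD(4)]]) auto
      also have "((\<lambda>f. \<Sum>k\<in>C. f k) \<circ> (\<lambda>\<omega>. restrict (\<lambda>k. W k \<omega>) C)) = U"
        by (auto simp: U_def fun_eq_iff)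
      also have "((\<lambda>f. \<Sum>k\<in>D. f k) \<circ> (\<lambda>\<omega>. restrict (\<lambda>k. W k \<omega>) D)) = V"
        by (auto simp: V_def fun_eq_iff)
      finally show ?thesis .
    qed
    have joint: "distributed M (lborel \<Otimes>\<^sub>M lborel) (\<lambda>\<omega>. (U \<omega>, V \<omega>))
        (\<lambda>(x, y). ennreal (normal_density 0 (sqrt (real (card C) / 2)) x) * ennreal (normal_density 0 (sqrt (real (card D) / 2)) y))"
      by (rule distributed_joint_indep[OF sigma_finite_lborel sigma_finite_lborel distU distV indUV])
    have Ts: "Tset \<in> sets (lborel \<Otimes>\<^sub>M lborel)"
      using Tset_sets by (simp add: sets_pair_measure_cong[OF sets_lborel sets_lborel])
    have s1: "0 < sqrt (real (card C) / 2)" using False finC by (simp add: card_gt_0_iff)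
    have s2: "0 < sqrt (real (card D) / 2)" using Dne' finD by (simp add: card_gt_0_iff)
    have "emeasure M {\<omega> \<in> space M. rsign (\<Sum>k\<in>J. Xv k \<omega> * c k) = rsign (\<Sum>k\<in>J. Xv k \<omega> * c' k)}
       = (\<integral>\<^sup>+z. (\<lambda>(x, y). ennreal (normal_density 0 (sqrt (real (card C) / 2)) x) * ennreal (normal_density 0 (sqrt (real (card D) / 2)) y)) z * indicator Tset z \<partial>(lborel \<Otimes>\<^sub>M lborel))"
      unfolding ev by (rule distributed_emeasure[OF joint Ts])
    also have "\<dots> = (\<integral>\<^sup>+u. \<integral>\<^sup>+v. ennreal (normal_density 0 (sqrt (real (card C) / 2)) u) * ennreal (normal_density 0 (sqrt (real (card D) / 2)) v) * indicator Tset (u, v) \<partial>lborel \<partial>lborel)"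
    proof -
      let ?f = "\<lambda>z. (\<lambda>(x, y). ennreal (normal_density 0 (sqrt (real (card C) / 2)) x) * ennreal (normal_density 0 (sqrt (real (card D) / 2)) y)) z * indicator Tset z"
      have "(\<integral>\<^sup>+z. ?f z \<partial>(lborel \<Otimes>\<^sub>M lborel)) = (\<integral>\<^sup>+u. \<integral>\<^sup>+v. ?f (u, v) \<partial>lborel \<partial>lborel)"
        by (rule lborel.nn_integral_fst[symmetric]) (use Ts in measurable)
      then show ?thesis by simp
    qed
    also have "\<dots> = ennreal (2 / pi * arctan (sqrt (real (card C) / 2) / sqrt (real (card D) / 2)))"
      by (rule core[OF s1 s2])
    also have "sqrt (real (card C) / 2) / sqrt (real (card D) / 2) = sqrt (real (card C) / real (card D))"
      by (simp add: real_sqrt_divide)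
    finally have "emeasure M {\<omega> \<in> space M. rsign (\<Sum>k\<in>J. Xv k \<omega> * c k) = rsign (\<Sum>k\<in>J. Xv k \<omega> * c' k)}
       = ennreal (2 / pi * arctan (sqrt (real (card C) / real (card D))))" .
    moreover have "0 \<le> 2 / pi * arctan (sqrt (real (card C) / real (card D)))"
      by simp
    ultimately show ?thesis by (simp add: measure_def C_def D_def)
  qed
qed

theorem theorem1:
  fixes M :: "'a measure" and Nr Nt d :: nat
    and H :: "nat \<Rightarrow> nat \<Rightarrow> 'a \<Rightarrow> complex"
    and x x' :: "nat \<Rightarrow> real"
  assumes "prob_space M"
    and "Nt \<ge> 1" and "Nr \<ge> 1"
    and "iid_CN_matrix M Nr Nt H"
    and "\<forall>j<Nt. x j \<in> {-1, 1}" and "\<forall>j<Nt. x' j \<in> {-1, 1}"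
    and "d = card {j. j < Nt \<and> x j \<noteq> x' j}"
    and "1 \<le> d" and "d \<le> Nt"
  shows "measure M {\<omega> \<in> space M. \<forall>i<Nr.
            csign (mat_vec Nt (\<lambda>i j. H i j \<omega>) x i) = csign (mat_vec Nt (\<lambda>i j. H i j \<omega>) x' i)}
         = ((2 / pi) * arctan (sqrt ((real Nt - real d) / real d))) ^ (2 * Nr)"
proof -
  interpret prob_space M by fact
  note iid = assms(4)[unfolded iid_CN_matrix_def]
  define X :: "nat \<times> nat \<times> bool \<Rightarrow> 'a \<Rightarrow> real" where
    "X = (\<lambda>(i, j, b) \<omega>. if b then Re (H i j \<omega>) else Im (H i j \<omega>))"
  define I where "I = {..<Nr} \<times> {..<Nt} \<times> (UNIV :: bool set)"
  define L where "L = {..<Nr} \<times> (UNIV :: bool set)"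
  define K where "K p = (\<lambda>j. (fst p, j, snd p)) ` {..<Nt}" for p :: "nat \<times> bool"
  define cx where "cx k = x (fst (snd k))" for k :: "nat \<times> nat \<times> bool"
  define cx' where "cx' k = x' (fst (snd k))" for k :: "nat \<times> nat \<times> bool"
  define Z where "Z p \<omega> = restrict (\<lambda>k. X k \<omega>) (K p)" for p \<omega>
  define A where "A p = {w \<in> space (PiM (K p) (\<lambda>_. borel :: real measure)).
      rsign (\<Sum>k\<in>K p. w k * cx k) = rsign (\<Sum>k\<in>K p. w k * cx' k)}" for p
  define val where "val = 2 / pi * arctan (sqrt ((real Nt - real d) / real d))"
  have indX: "indep_vars (\<lambda>_. borel) X I"
    using iid unfolding X_def I_def by simp
  have KI: "K p \<subseteq> I" if "p \<in> L" for p using that by (auto simp: K_def I_def L_def)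
  have disj: "disjoint_family_on K L" by (auto simp: disjoint_family_on_def K_def)
  have indZ: "indep_vars (\<lambda>p. PiM (K p) (\<lambda>_. borel)) Z L"
    unfolding Z_def[abs_def] by (rule indep_vars_restrict[OF indX KI disj])
  have finK: "finite (K p)" for p by (simp add: K_def)
  have injK: "inj_on (\<lambda>j. (fst p, j, snd p)) A" for p and A :: "nat set" by (auto simp: inj_on_def)
  have Asets: "A p \<in> sets (PiM (K p) (\<lambda>_. borel))" for p
  proof -
    have [measurable]: "(\<lambda>w. \<Sum>k\<in>K p. w k * cx k) \<in> borel_measurable (PiM (K p) (\<lambda>_. borel))"
      by (rule borel_measurable_sum, rule borel_measurable_times, rule measurable_component_singleton) auto
    have [measurable]: "(\<lambda>w. \<Sum>k\<in>K p. w k * cx' k) \<in> borel_measurable (PiM (K p) (\<lambda>_. borel))"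
      by (rule borel_measurable_sum, rule borel_measurable_times, rule measurable_component_singleton) auto
    show ?thesis unfolding A_def by measurable
  qed
  have Xmeas: "X k \<in> borel_measurable M" if "k \<in> I" for k
    using indX that by (auto simp: indep_vars_def)
  have sumK: "(\<Sum>k\<in>K (i, b). X k \<omega> * c k) = (\<Sum>j<Nt. X (i, j, b) \<omega> * c (i, j, b))" for i b \<omega> c
    unfolding K_def by (subst sum.reindex[OF injK]) simp
  have ReIm: "(\<Sum>k\<in>K (i, b). X k \<omega> * cx k) = (if b then Re (mat_vec Nt (\<lambda>i j. H i j \<omega>) x i) else Im (mat_vec Nt (\<lambda>i j. H i j \<omega>) x i))"
    "(\<Sum>k\<in>K (i, b). X k \<omega> * cx' k) = (if b then Re (mat_vec Nt (\<lambda>i j. H i j \<omega>) x' i) else Im (mat_vec Nt (\<lambda>i j. H i j \<omega>) x' i))"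
    for i b \<omega>
    unfolding sumK by (simp_all add: cx_def cx'_def X_def mat_vec_def Re_sum Im_sum)
  have pre: "Z p -` A p \<inter> space M = {\<omega> \<in> space M. rsign (\<Sum>k\<in>K p. X k \<omega> * cx k) = rsign (\<Sum>k\<in>K p. X k \<omega> * cx' k)}" for p
  proof -
    have "Z p \<omega> \<in> space (PiM (K p) (\<lambda>_. borel :: real measure))" for \<omega>
      by (simp add: Z_def space_PiM)
    moreover have "(\<Sum>k\<in>K p. Z p \<omega> k * c k) = (\<Sum>k\<in>K p. X k \<omega> * c k)" for \<omega> c
      by (rule sum.cong) (auto simp: Z_def)
    ultimately show ?thesis by (auto simp: A_def)
  qed
  have ev: "{\<omega> \<in> space M. \<forall>i<Nr.
            csign (mat_vec Nt (\<lambda>i j. H i j \<omega>) x i) = csign (mat_vec Nt (\<lambda>i j. H i j \<omega>) x' i)}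
      = (\<Inter>p\<in>L. Z p -` A p \<inter> space M)"
  proof -
    have cs: "csign z = csign w \<longleftrightarrow> rsign (Re z) = rsign (Re w) \<and> rsign (Im z) = rsign (Im w)" for z w
      by (auto simp: csign_def)
    have 0: "0 \<in> {..<Nr}" using \<open>Nr \<ge> 1\<close> by simp
    show ?thesis
    proof (intro set_eqI iffI)
      fix \<omega> assume "\<omega> \<in> (\<Inter>p\<in>L. Z p -` A p \<inter> space M)"
      then have sp: "\<omega> \<in> space M" and h: "\<And>i b. i < Nr \<Longrightarrow> rsign (\<Sum>k\<in>K (i, b). X k \<omega> * cx k) = rsign (\<Sum>k\<in>K (i, b). X k \<omega> * cx' k)"
        using 0 unfolding pre L_def by blast+
      show "\<omega> \<in> {\<omega> \<in> space M. \<forall>i<Nr.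
            csign (mat_vec Nt (\<lambda>i j. H i j \<omega>) x i) = csign (mat_vec Nt (\<lambda>i j. H i j \<omega>) x' i)}"
        using sp h[of _ True] h[of _ False] unfolding ReIm cs by simp
    next
      fix \<omega> assume "\<omega> \<in> {\<omega> \<in> space M. \<forall>i<Nr.
            csign (mat_vec Nt (\<lambda>i j. H i j \<omega>) x i) = csign (mat_vec Nt (\<lambda>i j. H i j \<omega>) x' i)}"
      then have "\<omega> \<in> space M \<and> (\<forall>i<Nr. \<forall>b. rsign (\<Sum>k\<in>K (i, b). X k \<omega> * cx k) = rsign (\<Sum>k\<in>K (i, b). X k \<omega> * cx' k))"
        unfolding ReIm cs by (simp add: all_bool_eq)
      then show "\<omega> \<in> (\<Inter>p\<in>L. Z p -` A p \<inter> space M)"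
        unfolding pre L_def by blast
    qed
  qed
  have Lne: "L \<noteq> {}" proof - have "(0, True) \<in> L" using \<open>Nr \<ge> 1\<close> by (simp add: L_def) then show ?thesis by blast qed
  have finL: "finite L" by (simp add: L_def)
  have factor: "prob (Z p -` A p \<inter> space M) = val" if p: "p \<in> L" for p
  proof -
    obtain i b where pib: "p = (i, b)" by (cases p)
    have i: "i < Nr" using p pib by (simp add: L_def)
    define D0 where "D0 = {j. j < Nt \<and> x j \<noteq> x' j}"
    define C0 where "C0 = {j. j < Nt \<and> x j = x' j}"
    have Deq: "{k \<in> K p. cx k \<noteq> cx' k} = (\<lambda>j. (i, j, b)) ` D0"
      by (auto simp: K_def pib cx_def cx'_def D0_def)
    have Ceq: "{k \<in> K p. cx k = cx' k} = (\<lambda>j. (i, j, b)) ` C0"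
      by (auto simp: K_def pib cx_def cx'_def C0_def)
    have cardD: "card {k \<in> K p. cx k \<noteq> cx' k} = d"
      unfolding Deq using injK[of "(i, b)"] by (simp add: card_image D0_def assms(7))
    have "card C0 + card D0 = Nt"
    proof -
      have "card (C0 \<union> D0) = card C0 + card D0"
        by (rule card_Un_disjoint) (auto simp: C0_def D0_def)
      moreover have "C0 \<union> D0 = {..<Nt}" by (auto simp: C0_def D0_def)
      ultimately show ?thesis by simp
    qed
    then have cardC: "card {k \<in> K p. cx k = cx' k} = Nt - d"
      unfolding Ceq using injK[of "(i, b)"] by (simp add: card_image D0_def assms(7))
    have "prob (Z p -` A p \<inter> space M) = 2 / pi * arctan (sqrt (real (card {k\<in>K p. cx k = cx' k}) / real (card {k\<in>K p. cx k \<noteq> cx' k})))"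
      unfolding pre
    proof (rule block)
      show "indep_vars (\<lambda>_. borel) X (K p)" by (rule indep_vars_subset[OF indX KI[OF p]])
      show "finite (K p)" by (rule finK)
      show "distributed M lborel (X k) (\<lambda>x. ennreal (normal_density 0 (sqrt (1 / 2)) x))" if "k \<in> K p" for k
      proof -
        from that obtain j where j: "j < Nt" "k = (i, j, b)" by (auto simp: K_def pib)
        have "X k = (if b then (\<lambda>\<omega>. Re (H i j \<omega>)) else (\<lambda>\<omega>. Im (H i j \<omega>)))"
          by (auto simp: X_def j)
        then show ?thesis using iid i j by auto
      qed
      show "cx k \<in> {-1, 1}" "cx' k \<in> {-1, 1}" if "k \<in> K p" for k
        using that assms(5,6) by (auto simp: K_def cx_def cx'_def)
      show "{k \<in> K p. cx k \<noteq> cx' k} \<noteq> {}" using cardD \<open>1 \<le> d\<close> by (metis card.empty not_one_le_zero)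
    qed
    also have "\<dots> = val" unfolding cardC cardD val_def using \<open>d \<le> Nt\<close> by (simp add: of_nat_diff)
    finally show ?thesis .
  qed
  have "measure M {\<omega> \<in> space M. \<forall>i<Nr.
            csign (mat_vec Nt (\<lambda>i j. H i j \<omega>) x i) = csign (mat_vec Nt (\<lambda>i j. H i j \<omega>) x' i)}
      = (\<Prod>p\<in>L. prob (Z p -` A p \<inter> space M))"
    unfolding ev by (rule indep_varsD[OF indZ Lne finL order_refl Asets])
  also have "\<dots> = val ^ card L" by (simp add: factor)
  also have "card L = 2 * Nr" by (simp add: L_def card_cartesian_product)
  finally show ?thesis by (simp add: val_def)
qed

end
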